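(* Assume Hypothesis (H), and let $(x_k)_{k\geq0}$ be the Newton iterates $F'_{x_k}(x_{k+1}-x_k)=-F(x_k)$ with $x_0=0$. Define recursively $\xi_0=0$, $\tilde M_0=M$, $\tilde a_0=a$, and for $k\geq 0$: $$w_k=\tilde M_k^{-1}\tilde a_k,\quad \xi_{k+1}=\xi_k+w_k,\quad \tilde a_{k+1}=b(w_k,w_k),\quad \tilde M_{k+1}=\tilde M_k-b(w_k,\cdot)-b(\cdot,w_k).$$ Then for every $k\geq 0$, $\tilde M_k$ is nonsingular and $\xi_k=x_k$, $\tilde M_k=F'_{x_k}$, $\tilde a_k=-F(x_k)$, and $w_k=x_{k+1}-x_k$.
   Context: Inequalities between vectors/matrices are componentwise. An M-matrix is a matrix $sI-P$ with $P\geq0$ entrywise and $s\geq\rho(P)$ ($\rho$ = spectral radius). Let $M\in\mathbb R^{n\times n}$ be a nonsingular M-matrix, $a\in\mathbb R^n$ with $a\geq 0$, and $b:\mathbb R^n\times\mathbb R^n\to\mathbb R^n$ a bilinear map (not necessarily symmetric) with $b(x,y)\geq 0$ whenever $x,y\geq 0$. A solution of $Mx=a+b(x,x)$ means a vector $x\geq 0$ satisfying it; a solution $x_\ast$ is minimal if $x_\ast\leq y$ for every solution $y$. $F(x):=Mx-a-b(x,x)$. For $x\in\mathbb R^n$, $b(x,\cdot)$ and $b(\cdot,x)$ denote the $n\times n$ matrices of $y\mapsto b(x,y)$ and $y\mapsto b(y,x)$; $F'_x:=M-b(x,\cdot)-b(\cdot,x)$. Hypothesis (H): the equation has a minimal solution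 $x_\ast$, $x_\ast>0$ (all components strictly positive), and either $F'_{x_\ast}$ is nonsingular, or $F'_{x_\ast}$ is irreducible and $F'_x\neq F'_{x_\ast}$ for every $x$ with $0\leq x\leq x_\ast$, $x\neq x_\ast$. *)

theory Defs
  imports "HOL-Analysis.Analysis"
begin

definition vnonneg :: "real^'n \<Rightarrow> bool" where
  "vnonneg x \<longleftrightarrow> (\<forall>i. 0 \<le> x $ i)"

definition vle :: "real^'n \<Rightarrow> real^'n \<Rightarrow> bool" where
  "vle x y \<longleftrightarrow> (\<forall>i. x $ i \<le> y $ i)"

definition vpos :: "real^'n \<Rightarrow> bool" where
  "vpos x \<longleftrightarrow> (\<forall>i. 0 < x $ i)"

definition mnonneg :: "real^'n^'n \<Rightarrow> bool" where
  "mnonneg P \<longleftrightarrow> (\<forall>i j. 0 \<le> P $ i $ j)"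

definition spectral_radius :: "real^'n^'n \<Rightarrow> real" where
  "spectral_radius P = Sup {cmod l | l. \<exists>v :: complex^'n. v \<noteq> 0 \<and>
      (\<chi> i j. complex_of_real (P $ i $ j)) *v v = l *s v}"

definition M_matrix :: "real^'n^'n \<Rightarrow> bool" where
  "M_matrix A \<longleftrightarrow> (\<exists>s P. mnonneg P \<and> spectral_radius P \<le> s \<and> A = s *\<^sub>R mat 1 - P)"

text \<open>Irreducible: no nonempty proper index set I with A i j = 0 for i in I, j not in I
  (i.e. A is not permutation-similar to a block upper triangular matrix).\<close>
definition irreducible_mat :: "real^'n^'n \<Rightarrow> bool" where
  "irreducible_mat A \<longleftrightarrow>
     \<not> (\<exists>I. I \<noteq> {} \<and> I \<noteq> UNIV \<and> (\<forall>i\<in>I. \<forall>j. j \<notin> I \<longrightarrow> A $ i $ j = 0))"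

definition Fmap :: "real^'n^'n \<Rightarrow> real^'n \<Rightarrow> (real^'n \<Rightarrow> real^'n \<Rightarrow> real^'n) \<Rightarrow> real^'n \<Rightarrow> real^'n" where
  "Fmap M a b x = M *v x - a - b x x"

definition Fderiv :: "real^'n^'n \<Rightarrow> (real^'n \<Rightarrow> real^'n \<Rightarrow> real^'n) \<Rightarrow> real^'n \<Rightarrow> real^'n^'n" where
  "Fderiv M b x = M - matrix (b x) - matrix (\<lambda>y. b y x)"

definition is_solution :: "real^'n^'n \<Rightarrow> real^'n \<Rightarrow> (real^'n \<Rightarrow> real^'n \<Rightarrow> real^'n) \<Rightarrow> real^'n \<Rightarrow> bool" where
  "is_solution M a b x \<longleftrightarrow> vnonneg x \<and> M *v x = a + b x x"

definition is_minimal_solution :: "real^'n^'n \<Rightarrow> real^'n \<Rightarrow> (real^'n \<Rightarrow> real^'n \<Rightarrow> real^'n) \<Rightarrow> real^'n \<Rightarrow> bool" where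
  "is_minimal_solution M a b x \<longleftrightarrow> is_solution M a b x \<and> (\<forall>y. is_solution M a b y \<longrightarrow> vle x y)"

definition hypH :: "real^'n^'n \<Rightarrow> real^'n \<Rightarrow> (real^'n \<Rightarrow> real^'n \<Rightarrow> real^'n) \<Rightarrow> bool" where
  "hypH M a b \<longleftrightarrow> (\<exists>xs. is_minimal_solution M a b xs \<and> vpos xs \<and>
      (invertible (Fderiv M b xs) \<or>
       (irreducible_mat (Fderiv M b xs) \<and>
        (\<forall>x. vnonneg x \<and> vle x xs \<and> x \<noteq> xs \<longrightarrow> Fderiv M b x \<noteq> Fderiv M b xs))))"

end

theory Submission
  imports Defs
begin


definition Zmat :: "real^'n^'n \<Rightarrow> bool" where
  "Zmat A \<longleftrightarrow> (\<forall>i j. i \<noteq> j \<longrightarrow> A $ i $ j \<le> 0)"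

definition Mgood :: "real^'n^'n \<Rightarrow> bool" where
  "Mgood A \<longleftrightarrow> invertible A \<and> (\<forall>x. vnonneg (A *v x) \<longrightarrow> vnonneg x)"

lemma mv_nth: "(A *v x) $ i = (\<Sum>j\<in>UNIV. A $ i $ j * x $ j)"
  by (simp add: matrix_vector_mult_def)

lemma mv_neg: "(A::real^'n^'n) *v (- x) = - (A *v x)"
  by (simp add: vec_eq_iff matrix_vector_mult_def sum_negf)

lemma inv_props:
  fixes A :: "real^'n^'n"
  assumes "invertible A"
  shows "A ** matrix_inv A = mat 1" "matrix_inv A ** A = mat 1"
proof -
  have "\<exists>A'. A ** A' = mat 1 \<and> A' ** A = mat 1" using assms invertible_def by blast
  then have "A ** matrix_inv A = mat 1 \<and> matrix_inv A ** A = mat 1"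
    unfolding matrix_inv_def by (rule someI_ex)
  then show "A ** matrix_inv A = mat 1" "matrix_inv A ** A = mat 1" by auto
qed

lemma inv_apply:
  fixes A :: "real^'n^'n"
  assumes "invertible A"
  shows "A *v (matrix_inv A *v y) = y" "matrix_inv A *v (A *v y) = y"
  using inv_props[OF assms] by (simp_all add: matrix_vector_mul_assoc)

lemma inj_invertible:
  fixes A :: "real^'n^'n"
  assumes "\<And>x. A *v x = 0 \<Longrightarrow> x = 0"
  shows "invertible A"
  using assms invertible_left_inverse matrix_left_invertible_ker by blast

lemma vpos_perturb:
  fixes v z :: "real^'n"
  assumes "vpos v"
  shows "\<exists>d>0. \<forall>t. 0 \<le> t \<and> t \<le> d \<longrightarrow> vpos (v + t *\<^sub>R z)"
proof -
  define d where "d = Min (range (\<lambda>i. v$i / (\<bar>z$i\<bar> + 1)))"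
  have fin: "finite (range (\<lambda>i. v$i / (\<bar>z$i\<bar> + 1)))" by simp
  have dpos: "d > 0" unfolding d_def
    using assms fin by (subst Min_gr_iff) (auto simp: vpos_def)
  have dle: "d \<le> v$i / (\<bar>z$i\<bar> + 1)" for i unfolding d_def using fin by auto
  show ?thesis
  proof (intro exI[of _ d] conjI allI impI dpos)
    fix t assume t: "0 \<le> t \<and> t \<le> d"
    show "vpos (v + t *\<^sub>R z)" unfolding vpos_def
    proof
      fix i
      have vi: "v$i > 0" using assms vpos_def by blast
      have "t * \<bar>z$i\<bar> \<le> d * \<bar>z$i\<bar>" using t by (simp add: mult_right_mono)
      also have "\<dots> \<le> v$i / (\<bar>z$i\<bar> + 1) * \<bar>z$i\<bar>" using dle[of i] by (rule mult_right_mono) auto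
      also have "\<dots> < v$i"
      proof -
        have "v$i / (\<bar>z$i\<bar> + 1) * \<bar>z$i\<bar> = v$i * (\<bar>z$i\<bar> / (\<bar>z$i\<bar> + 1))" by simp
        also have "\<dots> < v$i * 1" using vi by (intro mult_strict_left_mono) auto
        finally show ?thesis by simp
      qed
      finally have "t * \<bar>z$i\<bar> < v$i" .
      moreover have "- (t * \<bar>z$i\<bar>) \<le> t * z$i"
      proof -
        have "- \<bar>z$i\<bar> \<le> z$i" by simp
        then have "t * (- \<bar>z$i\<bar>) \<le> t * z$i" using t by (intro mult_left_mono) auto
        then show ?thesis by simp
      qed
      ultimately show "0 < (v + t *\<^sub>R z) $ i" by simp
    qed
  qed
qed

lemma mono_core:
  fixes B C :: "real^'n^'n" and l :: "real^'n"
  assumes Z: "Zmat B" and lpos: "vpos l"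
    and hyp: "\<And>I. I \<noteq> {} \<Longrightarrow> (\<forall>i\<in>I. (B *v l)$i = 0 \<and> (\<forall>j. j \<notin> I \<longrightarrow> B$i$j = 0)) \<Longrightarrow> I = UNIV \<and> B *v l \<noteq> 0"
    and Bl: "vnonneg (B *v l)"
  shows "Mgood B"
proof -
  have mono: "vnonneg x" if Bx: "vnonneg (B *v x)" for x
  proof (rule ccontr)
    assume neg: "\<not> vnonneg x"
    define t where "t = Max (range (\<lambda>i. - x$i / l$i))"
    have fin: "finite (range (\<lambda>i. - x$i / l$i))" by simp
    have tge: "- x$i / l$i \<le> t" for i unfolding t_def using fin by auto
    have "t \<in> range (\<lambda>i. - x$i / l$i)" unfolding t_def using Max_in[OF fin] by auto
    then obtain i0 where i0: "t = - x$i0 / l$i0" by auto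
    obtain i1 where "x$i1 < 0" using neg vnonneg_def by (meson not_le)
    moreover have "l$i1 > 0" using lpos vpos_def by blast
    ultimately have "- x$i1 / l$i1 > 0" by (simp add: divide_neg_pos)
    then have tpos: "t > 0" using tge[of i1] by linarith
    define y where "y = x + t *\<^sub>R l"
    have ynn: "y$i \<ge> 0" for i
    proof -
      have li: "l$i > 0" using lpos vpos_def by blast
      have "- x$i / l$i \<le> t" using tge[of i] by simp
      then have "(- x$i / l$i) * l$i \<le> t * l$i" using li by (intro mult_right_mono) auto
      moreover have "(- x$i / l$i) * l$i = - x$i" using li by simp
      ultimately have "- x$i \<le> t * l$i" by simp
      then show ?thesis by (simp add: y_def)
    qed
    define I where "I = {i. y$i = 0}"
    have li0: "l$i0 > 0" using lpos vpos_def by blast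
    have "t * l$i0 = - x$i0" using i0 li0 by simp
    then have "i0 \<in> I" unfolding I_def y_def by simp
    then have Ine: "I \<noteq> {}" by blast
    have By: "B *v y = B *v x + t *\<^sub>R (B *v l)" unfolding y_def
      by (simp add: matrix_vector_right_distrib matrix_vector_mult_scaleR)
    have key: "(B *v l)$i = 0 \<and> (\<forall>j. j \<notin> I \<longrightarrow> B$i$j = 0)" if iI: "i \<in> I" for i
    proof -
      have yi: "y$i = 0" using iI I_def by simp
      have "(B *v y)$i = (\<Sum>j\<in>UNIV. B$i$j * y$j)" by (rule mv_nth)
      also have "\<dots> = (\<Sum>j\<in>UNIV - {i}. B$i$j * y$j)"
        by (subst sum.remove[of UNIV i]) (auto simp: yi)
      finally have eq: "(B *v y)$i = (\<Sum>j\<in>UNIV - {i}. B$i$j * y$j)" .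
      have terms: "\<forall>j\<in>UNIV - {i}. B$i$j * y$j \<le> 0"
        using Z ynn unfolding Zmat_def by (auto intro: mult_nonpos_nonneg)
      then have le: "(B *v y)$i \<le> 0" unfolding eq by (intro sum_nonpos) blast
      have ge1: "(B *v x)$i \<ge> 0" using Bx vnonneg_def by blast
      have ge2: "(B *v l)$i \<ge> 0" using Bl vnonneg_def by blast
      have sp: "(B *v y)$i = (B *v x)$i + t * (B *v l)$i" using By by simp
      have tp: "t * (B *v l)$i \<ge> 0" using tpos ge2 by simp
      have z2: "(B *v y)$i = 0" using sp tp le ge1 by linarith
      have "t * (B *v l)$i = 0" using sp tp le ge1 by linarith
      then have z1: "(B *v l)$i = 0" using tpos by simp
      have "(\<Sum>j\<in>UNIV - {i}. - (B$i$j * y$j)) = 0" using eq z2 by (simp add: sum_negf)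
      then have "\<forall>j\<in>UNIV - {i}. - (B$i$j * y$j) = 0"
        using sum_nonneg_eq_0_iff[of "UNIV - {i}" "\<lambda>j. - (B$i$j * y$j)"] terms by simp
      then have "\<forall>j\<in>UNIV - {i}. B$i$j * y$j = 0" by simp
      then have "B$i$j = 0" if "j \<notin> I" for j
        using that iI ynn[of j] I_def by auto
      with z1 show ?thesis by blast
    qed
    from hyp[OF Ine] key have IU: "I = UNIV" and Bl0: "B *v l \<noteq> 0" by blast+
    then have "y = 0" unfolding I_def vec_eq_iff by (metis (mono_tags) UNIV_I mem_Collect_eq zero_index)
    then have "x = - t *\<^sub>R l" unfolding y_def by (simp add: algebra_simps eq_neg_iff_add_eq_0)
    then have "B *v x = - t *\<^sub>R (B *v l)" by (simp add: mv_neg matrix_vector_mult_scaleR)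
    then have "\<forall>i. (B *v l)$i \<le> 0"
    proof (intro allI)
      fix i assume e: "B *v x = - t *\<^sub>R (B *v l)"
      have "0 \<le> (B *v x)$i" using Bx vnonneg_def by blast
      also have "\<dots> = - t * (B *v l)$i" using e by simp
      finally show "(B *v l)$i \<le> 0" using tpos by (simp add: mult_le_0_iff)
    qed
    with Bl have "B *v l = 0" unfolding vnonneg_def by (simp add: vec_eq_iff order_antisym)
    with Bl0 show False by simp
  qed
  have "invertible B"
  proof (rule inj_invertible)
    fix x assume "B *v x = 0"
    then have "vnonneg x" "vnonneg (-x)" using mono[of x] mono[of "-x"]
      by (auto simp: vnonneg_def mv_neg)
    then show "x = 0" by (simp add: vnonneg_def vec_eq_iff order_antisym)
  qed
  with mono show ?thesis unfolding Mgood_def by blast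
qed




lemma mono_pos:
  fixes B :: "real^'n^'n"
  assumes "Zmat B" "vpos l" "vpos (B *v l)"
  shows "Mgood B"
proof (rule mono_core[OF assms(1,2)])
  show "vnonneg (B *v l)" using assms(3) by (auto simp: vpos_def vnonneg_def less_imp_le)
  fix I :: "'n set" assume "I \<noteq> {}" "\<forall>i\<in>I. (B *v l)$i = 0 \<and> (\<forall>j. j \<notin> I \<longrightarrow> B$i$j = 0)"
  then show "I = UNIV \<and> B *v l \<noteq> 0" using assms(3) unfolding vpos_def
    by (metis all_not_in_conv less_irrefl)
qed

lemma mv_diff_nth: "((B::real^'n^'n) *v l)$i - (C *v l)$i = (\<Sum>j\<in>UNIV. (B$i$j - C$i$j) * l$j)"
  by (simp add: mv_nth sum_subtractf[symmetric] left_diff_distrib)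

lemma mono_irr:
  fixes B C :: "real^'n^'n"
  assumes Z: "Zmat B" and irr: "irreducible_mat C" and le: "\<And>i j. C$i$j \<le> B$i$j"
    and l: "vpos l" and Cl: "vnonneg (C *v l)" and Bl0: "B *v l \<noteq> 0"
  shows "Mgood B"
proof -
  have dnn: "(B *v l)$i - (C *v l)$i \<ge> 0" for i
    unfolding mv_diff_nth using le l
    by (intro sum_nonneg) (auto simp: vpos_def less_imp_le)
  have Bl: "vnonneg (B *v l)" using Cl dnn unfolding vnonneg_def by (smt (verit))
  show ?thesis
  proof (rule mono_core[OF Z l _ Bl])
    fix I :: "'n set" assume Ine: "I \<noteq> {}" and H: "\<forall>i\<in>I. (B *v l)$i = 0 \<and> (\<forall>j. j \<notin> I \<longrightarrow> B$i$j = 0)"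
    have "C$i$j = 0" if "i \<in> I" "j \<notin> I" for i j
    proof -
      have "(C *v l)$i \<ge> 0" using Cl vnonneg_def by blast
      then have "(B *v l)$i - (C *v l)$i \<le> 0" using H that by simp
      then have s0: "(\<Sum>k\<in>UNIV. (B$i$k - C$i$k) * l$k) = 0" using dnn[of i] unfolding mv_diff_nth by linarith
      have "\<forall>k\<in>UNIV. (B$i$k - C$i$k) * l$k = 0"
        using sum_nonneg_eq_0_iff[of UNIV "\<lambda>k. (B$i$k - C$i$k) * l$k"] s0 le l
        by (simp add: vpos_def less_imp_le)
      then have "(B$i$j - C$i$j) * l$j = 0" by blast
      then have "B$i$j = C$i$j" using l vpos_def by (metis eq_iff_diff_eq_0 less_irrefl mult_eq_0_iff)
      then show ?thesis using H that by simp
    qed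
    then have "I = UNIV" using irr Ine unfolding irreducible_mat_def by blast
    then show "I = UNIV \<and> B *v l \<noteq> 0" using Bl0 by simp
  qed
qed

lemma semi1:
  fixes A :: "real^'n^'n"
  assumes "vnonneg v" "vpos (A *v v)"
  shows "\<exists>v'. vpos v' \<and> vpos (A *v v')"
proof -
  obtain d where d: "d > 0" "\<And>t. 0 \<le> t \<and> t \<le> d \<Longrightarrow> vpos (A *v v + t *\<^sub>R (A *v vec 1))"
    using vpos_perturb[OF assms(2)] by blast
  define v' where "v' = v + d *\<^sub>R vec 1"
  have "A *v v' = A *v v + d *\<^sub>R (A *v vec 1)" unfolding v'_def
    by (simp add: matrix_vector_right_distrib matrix_vector_mult_scaleR)
  then have "vpos (A *v v')" using d by simp
  moreover have "vpos v'" using assms(1) d(1) unfolding v'_def vpos_def vnonneg_def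
    by (simp add: add_nonneg_pos)
  ultimately show ?thesis by blast
qed

lemma semi2:
  fixes A :: "real^'n^'n"
  assumes "vpos v" "vnonneg (A *v v)" "invertible A"
  shows "\<exists>v'. vpos v' \<and> vpos (A *v v')"
proof -
  define z where "z = matrix_inv A *v vec 1"
  obtain d where d: "d > 0" "\<And>t. 0 \<le> t \<and> t \<le> d \<Longrightarrow> vpos (v + t *\<^sub>R z)"
    using vpos_perturb[OF assms(1)] by blast
  define v' where "v' = v + d *\<^sub>R z"
  have "A *v v' = A *v v + d *\<^sub>R vec 1" unfolding v'_def z_def
    by (simp add: matrix_vector_right_distrib matrix_vector_mult_scaleR inv_apply[OF assms(3)])
  then have "vpos (A *v v')" using assms(2) d(1) unfolding vpos_def vnonneg_def
    by (simp add: add_nonneg_pos)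
  moreover have "vpos v'" using d unfolding v'_def by simp
  ultimately show ?thesis by blast
qed

lemma good_C:
  fixes A :: "real^'n^'n"
  assumes "Mgood A"
  shows "\<exists>v. vpos v \<and> vpos (A *v v)"
proof -
  have inv: "invertible A" using assms Mgood_def by blast
  define v where "v = matrix_inv A *v vec 1"
  have Av: "A *v v = vec 1" unfolding v_def using inv_apply[OF inv] by simp
  then have "vnonneg v" using assms unfolding Mgood_def by (simp add: vnonneg_def)
  moreover have "vpos (A *v v)" using Av by (simp add: vpos_def)
  ultimately show ?thesis using semi1 by blast
qed

lemma good_inv_nonneg:
  fixes A :: "real^'n^'n"
  assumes "Mgood A"
  shows "matrix_inv A $ i $ j \<ge> 0"
proof -
  have inv: "invertible A" using assms Mgood_def by blast
  have "A *v (matrix_inv A *v axis j 1) = axis j 1" using inv_apply[OF inv] by simp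
  then have "vnonneg (matrix_inv A *v axis j 1)" using assms unfolding Mgood_def
    by (simp add: vnonneg_def axis_def)
  then have "(matrix_inv A *v axis j 1) $ i \<ge> 0" using vnonneg_def by blast
  then show ?thesis by (simp add: matrix_vector_mult_basis column_def)
qed

lemma good_trans:
  fixes A :: "real^'n^'n"
  assumes "Mgood A"
  shows "Mgood (transpose A)"
proof -
  have inv: "invertible A" using assms Mgood_def by blast
  have tinv: "invertible (transpose A)" using transpose_invertible[OF inv] .
  have L: "transpose (matrix_inv A) ** transpose A = mat 1"
    using inv_props(1)[OF inv] by (metis matrix_transpose_mul transpose_mat)
  have "vnonneg x" if "vnonneg (transpose A *v x)" for x
  proof -
    have "x = transpose (matrix_inv A) *v (transpose A *v x)"
      by (simp only: matrix_vector_mul_assoc L matrix_vector_mul_lid)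
    also have "vnonneg \<dots>" unfolding vnonneg_def
    proof
      fix i
      have "(transpose (matrix_inv A) *v (transpose A *v x)) $ i
          = (\<Sum>j\<in>UNIV. transpose (matrix_inv A) $ i $ j * (transpose A *v x) $ j)" by (rule mv_nth)
      also have "\<dots> \<ge> 0" using that good_inv_nonneg[OF assms] unfolding vnonneg_def
        by (intro sum_nonneg) (simp add: transpose_def)
      finally show "0 \<le> (transpose (matrix_inv A) *v (transpose A *v x)) $ i" .
    qed
    finally show ?thesis .
  qed
  with tinv show ?thesis unfolding Mgood_def by blast
qed

lemma good_cmp:
  fixes A B :: "real^'n^'n"
  assumes "Mgood A" "Zmat B" "\<And>i j. A$i$j \<le> B$i$j"
  shows "Mgood B"
proof -
  obtain v where v: "vpos v" "vpos (A *v v)" using good_C[OF assms(1)] by blast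
  have "(B *v v)$i - (A *v v)$i \<ge> 0" for i
    unfolding mv_diff_nth using assms(3) v(1)
    by (intro sum_nonneg) (auto simp: vpos_def less_imp_le)
  then have "vpos (B *v v)" using v(2) unfolding vpos_def by (smt (verit))
  then show ?thesis using mono_pos[OF assms(2) v(1)] by blast
qed




lemma matrix_apply_lin: "linear f \<Longrightarrow> matrix f *v x = f (x::real^'n)"
  using matrix_vector_mul(2)[of f] by metis

lemma FD_apply:
  assumes "bilinear b"
  shows "Fderiv M b x *v y = M *v y - b x y - b y x"
proof -
  have l1: "linear (b x)" using assms unfolding bilinear_def by blast
  have l2: "linear (\<lambda>y. b y x)" using assms unfolding bilinear_def by simp
  show ?thesis unfolding Fderiv_def
    by (simp add: matrix_vector_mult_diff_rdistrib matrix_apply_lin[OF l1] matrix_apply_lin[OF l2])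
qed

lemma FD_entry: "Fderiv M b x $ i $ j = M$i$j - b x (axis j 1) $ i - b (axis j 1) x $ i"
  by (simp add: Fderiv_def matrix_def)

lemma FEXP:
  assumes "bilinear b"
  shows "Fmap M a b y = Fmap M a b x + Fderiv M b x *v (y - x) - b (y-x) (y-x)"
proof -
  define d where "d = y - x"
  have y: "y = x + d" unfolding d_def by simp
  show ?thesis unfolding d_def[symmetric] FD_apply[OF assms] Fmap_def y
    by (simp add: bilinear_ladd[OF assms] bilinear_radd[OF assms] matrix_vector_right_distrib algebra_simps)
qed

lemma vnonneg_axis: "vnonneg (axis j (1::real))"
  by (simp add: vnonneg_def axis_def)

lemma Zmat_M: "M_matrix M \<Longrightarrow> Zmat M"
  unfolding M_matrix_def Zmat_def mnonneg_def by (auto simp: mat_def)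

locale qve =
  fixes M :: "real^'n^'n" and a :: "real^'n" and b :: "real^'n \<Rightarrow> real^'n \<Rightarrow> real^'n" and xs :: "real^'n"
  assumes MZ: "Zmat M" and Minv: "invertible M" and ann: "vnonneg a"
    and bil: "bilinear b" and bnn: "\<And>u v. vnonneg u \<Longrightarrow> vnonneg v \<Longrightarrow> vnonneg (b u v)"
    and xsmin: "is_minimal_solution M a b xs" and xspos: "vpos xs"
begin

lemma xs_sol: "M *v xs = a + b xs xs" and xs_nn: "vnonneg xs"
  using xsmin unfolding is_minimal_solution_def is_solution_def by auto

lemma F_xs: "Fmap M a b xs = 0"
  using xs_sol by (simp add: Fmap_def)

lemma bnn_i: "vnonneg u \<Longrightarrow> vnonneg v \<Longrightarrow> b u v $ i \<ge> 0"
  using bnn vnonneg_def by blast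

lemma bmono: 
  assumes "vnonneg x" "vle x y"
  shows "vle (b x x) (b y y)"
proof -
  have d: "vnonneg (y - x)" using assms(2) by (simp add: vle_def vnonneg_def)
  have y: "vnonneg y" using assms by (auto simp: vle_def vnonneg_def intro: order_trans)
  have "b y y - b x x = b (y - x) y + b x (y - x)"
    by (simp add: bilinear_lsub[OF bil] bilinear_rsub[OF bil])
  then have "b y y $ i - b x x $ i = b (y - x) y $ i + b x (y - x) $ i" for i
    by (metis vector_minus_component vector_add_component)
  moreover have "b (y - x) y $ i \<ge> 0" "b x (y - x) $ i \<ge> 0" for i
    using bnn_i d y assms(1) by auto
  ultimately show ?thesis unfolding vle_def by (smt (verit))
qed

lemma Zmat_J: "vnonneg x \<Longrightarrow> Zmat (Fderiv M b x)"
  using MZ bnn_i[OF _ vnonneg_axis] bnn_i[OF vnonneg_axis]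
  unfolding Zmat_def FD_entry by (smt (verit))

lemma J_cmp:
  assumes "vnonneg x" "vle x y"
  shows "Fderiv M b y $ i $ j \<le> Fderiv M b x $ i $ j"
proof -
  have d: "vnonneg (y - x)" using assms(2) by (simp add: vle_def vnonneg_def)
  have "b y (axis j 1) $ i - b x (axis j 1) $ i = b (y - x) (axis j 1) $ i"
    by (simp add: bilinear_lsub[OF bil])
  moreover have "b (axis j 1) y $ i - b (axis j 1) x $ i = b (axis j 1) (y - x) $ i"
    by (simp add: bilinear_rsub[OF bil])
  moreover have "b (y - x) (axis j 1) $ i \<ge> 0" "b (axis j 1) (y - x) $ i \<ge> 0"
    using bnn_i d vnonneg_axis by auto
  ultimately show ?thesis unfolding FD_entry by linarith
qed

lemma M_good: "Mgood M"
proof -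
  have "vnonneg (M *v xs)" using xs_sol ann bnn[OF xs_nn xs_nn]
    by (simp add: vnonneg_def)
  then obtain v where "vpos v" "vpos (M *v v)" using semi2[OF xspos _ Minv] by blast
  then show ?thesis using mono_pos[OF MZ] by blast
qed

lemma super:
  assumes y: "vnonneg y" and sup: "vle (a + b y y) (M *v y)"
  shows "vle xs y"
proof -
  define S where "S = cbox 0 y"
  define G where "G = (\<lambda>x. matrix_inv M *v (a + b x x))"
  have memS: "x \<in> S \<longleftrightarrow> vnonneg x \<and> vle x y" for x
    unfolding S_def mem_box_cart vnonneg_def vle_def by auto
  have bb: "bounded_bilinear b" using bil bilinear_conv_bounded_bilinear by blast
  have cont: "continuous_on S G" unfolding G_def
    by (intro continuous_intros bounded_linear.continuous_on[OF matrix_vector_mul_bounded_linear]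
        bounded_bilinear.continuous_on[OF bb])
  have MG: "M *v G x = a + b x x" for x unfolding G_def using inv_apply[OF Minv] by simp
  have GS: "G x \<in> S" if "x \<in> S" for x
  proof -
    have x: "vnonneg x" "vle x y" using that memS by auto
    have "vnonneg (M *v G x)" unfolding MG using ann bnn[OF x(1) x(1)] by (simp add: vnonneg_def)
    then have g0: "vnonneg (G x)" using M_good Mgood_def by blast
    have "vle (b x x) (b y y)" using bmono x by blast
    then have "vnonneg (M *v (y - G x))" using sup
      unfolding MG matrix_vector_mult_diff_distrib vnonneg_def vle_def
      by (simp add: add_le_cancel_left) (smt (verit))
    then have "vnonneg (y - G x)" using M_good Mgood_def by blast
    then have "vle (G x) y" by (simp add: vnonneg_def vle_def)
    with g0 show ?thesis using memS by blast
  qed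
  have "0 \<in> S" unfolding S_def mem_box_cart using y vnonneg_def by auto
  then have "compact S" "convex S" "S \<noteq> {}" unfolding S_def by auto
  then obtain z where z: "z \<in> S" "G z = z"
    using brouwer[of S G] cont GS by blast
  have "is_solution M a b z" unfolding is_solution_def using z memS MG[of z] by auto
  then have "vle xs z" using xsmin is_minimal_solution_def by blast
  then show ?thesis using z memS unfolding vle_def by (meson order_trans)
qed

end



context qve begin

lemma Mz_le:
  assumes "vnonneg z"
  shows "(M *v z)$i \<le> M$i$i * z$i"
proof -
  have "(M *v z)$i = (\<Sum>j\<in>UNIV. M$i$j * z$j)" by (rule mv_nth)
  also have "\<dots> = M$i$i * z$i + (\<Sum>j\<in>UNIV - {i}. M$i$j * z$j)"
    by (subst sum.remove[of UNIV i]) auto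
  also have "(\<Sum>j\<in>UNIV - {i}. M$i$j * z$j) \<le> 0"
    using MZ assms unfolding Zmat_def vnonneg_def by (intro sum_nonpos) (auto intro: mult_nonpos_nonneg)
  finally show ?thesis by simp
qed

lemma bad:
  assumes e: "e > 0" and z: "vnonneg z" "z \<noteq> 0"
    and Jz: "\<And>i. (Fderiv M b xs *v z)$i \<le> - e * z$i"
  shows False
proof -
  have fin: "finite (range (\<lambda>i. z$i / xs$i))" by simp
  define R where "R = Max (range (\<lambda>i. z$i / xs$i)) + 1"
  have xsi: "xs$i > 0" for i using xspos vpos_def by blast
  have zi: "z$i \<ge> 0" for i using z vnonneg_def by blast
  have Rge: "z$i / xs$i + 1 \<le> R" for i unfolding R_def using fin by auto
  have R0: "R > 0" using Rge[of undefined] zi[of undefined] xsi[of undefined]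
    by (smt (verit) divide_nonneg_pos)
  have zR: "z$i \<le> R * xs$i" for i
  proof -
    have "z$i / xs$i \<le> R" using Rge[of i] by simp
    then show ?thesis using xsi[of i] by (simp add: divide_le_eq mult.commute)
  qed
  define m where "m = (\<Sum>i\<in>UNIV. \<bar>M$i$i\<bar>)"
  have m0: "m \<ge> 0" unfolding m_def by (simp add: sum_nonneg)
  have mge: "M$i$i \<le> m" for i
  proof -
    have "\<bar>M$i$i\<bar> \<le> m" unfolding m_def
      by (rule member_le_sum[of i UNIV "\<lambda>i. \<bar>M$i$i\<bar>"]) auto
    then show ?thesis by simp
  qed
  define s where "s = min (1 / (2 * R)) (e / (2 * R * (m + 1)))"
  have s0: "s > 0" unfolding s_def using R0 e m0 by simp
  have sR: "s * R \<le> 1/2"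
  proof -
    have "s \<le> 1 / (2 * R)" unfolding s_def by simp
    then have "s * R \<le> 1 / (2 * R) * R" using R0 by (intro mult_right_mono) auto
    also have "1 / (2 * R) * R = 1/2" using R0 by simp
    finally show ?thesis .
  qed
  have sRm: "s * R * m \<le> e / 2"
  proof -
    have "s \<le> e / (2 * R * (m + 1))" unfolding s_def by simp
    then have "s * R \<le> e / (2 * R * (m + 1)) * R" using R0 by (intro mult_right_mono) auto
    also have "\<dots> = e / (2 * (m + 1))" using R0 by simp
    finally have "s * R * m \<le> e / (2 * (m + 1)) * m" using m0 by (intro mult_right_mono) auto
    also have "\<dots> \<le> e / 2"
    proof -
      have "e / (2 * (m + 1)) * m = e / 2 * (m / (m + 1))" using m0 by simp
      also have "\<dots> \<le> e / 2 * 1" using e m0 by (intro mult_left_mono) auto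
      finally show ?thesis by simp
    qed
    finally show ?thesis .
  qed
  define y where "y = xs - s *\<^sub>R z"
  have Fy: "Fmap M a b y = - s *\<^sub>R (Fderiv M b xs *v z) - (s * s) *\<^sub>R b z z"
    using FEXP[OF bil, of M a y xs] F_xs unfolding y_def
    by (simp add: matrix_vector_mult_scaleR mv_neg bilinear_lneg[OF bil] bilinear_rneg[OF bil]
        bilinear_lmul[OF bil] bilinear_rmul[OF bil])
  have ynn: "vnonneg y" unfolding vnonneg_def y_def
  proof
    fix i
    have "s * z$i \<le> s * (R * xs$i)" using zR[of i] s0 by (simp add: mult_left_mono)
    also have "\<dots> = (s * R) * xs$i" by simp
    also have "\<dots> \<le> 1/2 * xs$i" using sR xsi[of i] by (simp add: mult_right_mono)
    finally show "0 \<le> (xs - s *\<^sub>R z) $ i" using xsi[of i] by simp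
  qed
  have Fnn: "Fmap M a b y $ i \<ge> 0" for i
  proof -
    define p where "p = - (Fderiv M b xs *v z)$i"
    have pe: "p \<ge> e * z$i" unfolding p_def using Jz[of i] by simp
    have p0: "p \<ge> 0" using pe e zi[of i] by (smt (verit) mult_nonneg_nonneg)
    define q where "q = b z z $ i"
    have "vle (b z z) (b (R *\<^sub>R xs) z)"
    proof -
      have "vnonneg (b (R *\<^sub>R xs - z) z)" using bnn z(1) zR
        by (simp add: vnonneg_def)
      then show ?thesis by (simp add: vle_def vnonneg_def bilinear_lsub[OF bil])
    qed
    then have q1: "q \<le> R * b xs z $ i" unfolding q_def vle_def by (simp add: bilinear_lmul[OF bil])
    have "(Fderiv M b xs *v z)$i = (M *v z)$i - b xs z $ i - b z xs $ i"
      by (simp add: FD_apply[OF bil])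
    then have "b xs z $ i \<le> (M *v z)$i + p" unfolding p_def
      using bnn_i[OF z(1) xs_nn, of i] by linarith
    also have "\<dots> \<le> m * z$i + p" using Mz_le[OF z(1), of i] mge[of i] zi[of i]
      by (smt (verit) mult_right_mono)
    finally have "R * b xs z $ i \<le> R * (m * z$i + p)" using R0 by simp
    with q1 have q2: "q \<le> R * (m * z$i + p)" by linarith
    have "s * R * p \<le> p / 2" using mult_right_mono[OF sR p0] by simp
    moreover have "s * R * m * z$i \<le> e / 2 * z$i" using mult_right_mono[OF sRm zi[of i]] by simp
    ultimately have "s * (R * (m * z$i + p)) \<le> p" using pe by (simp add: algebra_simps)
    then have "s * q \<le> p" using q2 s0 by (smt (verit) mult_left_mono)
    then have "s * (s * q) \<le> s * p" using s0 by (simp add: mult_left_mono)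
    moreover have "Fmap M a b y $ i = s * p - s * (s * q)" unfolding Fy p_def q_def by simp
    ultimately show ?thesis by simp
  qed
  have "vle (a + b y y) (M *v y)" using Fnn unfolding vle_def Fmap_def by (simp add: algebra_simps)
  then have "vle xs y" using super[OF ynn] by blast
  then have "z$i \<le> 0" for i
  proof -
    assume "vle xs y"
    then have "xs$i \<le> xs$i - s * z$i" unfolding vle_def y_def by simp
    then have "s * z$i \<le> 0" by simp
    then show ?thesis using s0 by (simp add: mult_le_0_iff)
  qed
  then have "z = 0" using zi by (simp add: vec_eq_iff order_antisym)
  with z(2) show False by simp
qed

end



definition stdsimp :: "(real^'n) set" where
  "stdsimp = {z. vnonneg z \<and> sum (\<lambda>i. z$i) UNIV = 1}"

lemma axis_stdsimp: "axis j 1 \<in> (stdsimp :: (real^'n) set)"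
proof -
  have "sum (\<lambda>i. axis j (1::real) $ i) UNIV = 1"
    by (simp add: axis_def)
  then show ?thesis unfolding stdsimp_def using vnonneg_axis by auto
qed

lemma stdsimp_compact: "compact (stdsimp :: (real^'n) set)"
proof (subst compact_eq_bounded_closed, rule conjI)
  have "stdsimp \<subseteq> cbox 0 (vec 1 :: real^'n)"
  proof
    fix z :: "real^'n" assume z: "z \<in> stdsimp"
    have "z$i \<le> 1" for i
    proof -
      have "z$i \<le> sum (\<lambda>i. z$i) UNIV"
        by (rule member_le_sum) (use z in \<open>auto simp: stdsimp_def vnonneg_def\<close>)
      then show ?thesis using z unfolding stdsimp_def by simp
    qed
    then show "z \<in> cbox 0 (vec 1)" using z unfolding mem_box_cart stdsimp_def vnonneg_def by auto
  qed
  then show "bounded (stdsimp :: (real^'n) set)" using bounded_cbox bounded_subset by blast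
next
  have e: "stdsimp = {z::real^'n. \<forall>i. 0 \<le> z$i} \<inter> {z. sum (\<lambda>i. z$i) UNIV = 1}"
    unfolding stdsimp_def vnonneg_def by auto
  show "closed (stdsimp :: (real^'n) set)" unfolding e
    by (intro closed_Int closed_Collect_all closed_Collect_le closed_Collect_eq continuous_intros)
qed

lemma stdsimp_convex: "convex (stdsimp :: (real^'n) set)"
  unfolding convex_def stdsimp_def vnonneg_def
  by (auto simp: sum.distrib sum_distrib_left[symmetric])

lemma sep_alt:
  fixes B :: "real^'n^'n" and T :: "(real^'n) set"
  assumes T: "closed T" "convex T"
  shows "(\<exists>z\<in>stdsimp. B *v z \<in> T) \<or> (\<exists>c \<beta>. (\<forall>j. inner c (column j B) < \<beta>) \<and> (\<forall>t\<in>T. \<beta> < inner c t))"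
proof (cases "\<exists>z\<in>stdsimp. B *v z \<in> T")
  case False
  define S where "S = (\<lambda>z. B *v z) ` stdsimp"
  have "compact S" unfolding S_def
    by (intro compact_continuous_image stdsimp_compact linear_continuous_on) simp
  moreover have "convex S" unfolding S_def
    by (intro convex_linear_image stdsimp_convex) simp
  moreover have "S \<noteq> {}" unfolding S_def using axis_stdsimp by blast
  moreover have "S \<inter> T = {}" using False S_def by blast
  ultimately obtain c \<beta> where c: "\<forall>x\<in>S. inner c x < \<beta>" "\<forall>x\<in>T. inner c x > \<beta>"
    using separating_hyperplane_compact_closed[of S T] T by blast
  have "inner c (column j B) < \<beta>" for j
  proof -
    have "B *v axis j 1 \<in> S" unfolding S_def using axis_stdsimp by blast
    then show ?thesis using c(1) by (simp add: matrix_vector_mult_basis)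
  qed
  then show ?thesis using c(2) by blast
qed simp

lemma inner_axis_scale: "inner c (s *\<^sub>R axis i (1::real)) = s * c$i"
  by (simp add: inner_axis)

lemma alt1:
  fixes A :: "real^'n^'n"
  shows "(\<exists>z. vnonneg z \<and> z \<noteq> 0 \<and> (\<forall>i. (A *v z)$i \<le> 0)) \<or> (\<exists>l. vnonneg l \<and> vpos (transpose A *v l))"
proof -
  define T where "T = {t::real^'n. \<forall>i. t$i \<le> 0}"
  have "closed T" unfolding T_def
    by (intro closed_Collect_all closed_Collect_le continuous_intros)
  moreover have "convex T" unfolding T_def convex_def
    by (auto intro!: add_nonpos_nonpos mult_nonneg_nonpos)
  ultimately consider (a) "\<exists>z\<in>stdsimp. A *v z \<in> T" | (b) "\<exists>c \<beta>. (\<forall>j. inner c (column j A) < \<beta>) \<and> (\<forall>t\<in>T. \<beta> < inner c t)"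
    using sep_alt by blast
  then show ?thesis
  proof cases
    case a
    then obtain z where z: "z \<in> stdsimp" "A *v z \<in> T" by blast
    have "z \<noteq> 0" using z(1) unfolding stdsimp_def by auto
    then show ?thesis using z unfolding stdsimp_def T_def by blast
  next
    case b
    then obtain c \<beta> where c: "\<forall>j. inner c (column j A) < \<beta>" "\<forall>t\<in>T. \<beta> < inner c t" by blast
    have "0 \<in> T" unfolding T_def by simp
    then have b0: "\<beta> < 0" using c(2) by fastforce
    have ci: "c$i \<le> 0" for i
    proof (rule ccontr)
      assume "\<not> c$i \<le> 0"
      then have ci: "c$i > 0" by simp
      have "(\<beta> / c$i) *\<^sub>R axis i 1 \<in> T" unfolding T_def using ci b0
        by (auto simp: axis_def divide_neg_pos less_imp_le)
      then have "\<beta> < inner c ((\<beta> / c$i) *\<^sub>R axis i 1)" using c(2) by blast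
      also have "\<dots> = \<beta>" unfolding inner_axis_scale using ci by simp
      finally show False by simp
    qed
    define l where "l = - c"
    have "vnonneg l" unfolding l_def vnonneg_def using ci by simp
    moreover have "vpos (transpose A *v l)" unfolding vpos_def
    proof
      fix j
      have "(transpose A *v l)$j = - inner c (column j A)"
        unfolding l_def mv_nth by (simp add: transpose_def inner_vec_def column_def sum_negf mult.commute)
      then show "0 < (transpose A *v l)$j" using c(1) b0 by (smt (verit))
    qed
    ultimately show ?thesis by blast
  qed
qed

lemma alt2:
  fixes A :: "real^'n^'n"
  shows "(\<exists>l. vnonneg l \<and> l \<noteq> 0 \<and> vnonneg (transpose A *v l)) \<or> (\<exists>z \<beta>. vnonneg z \<and> \<beta> < 0 \<and> (\<forall>i. (A *v z)$i \<le> \<beta>))"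
proof -
  define T where "T = {t::real^'n. \<forall>i. 0 \<le> t$i}"
  have "closed T" unfolding T_def
    by (intro closed_Collect_all closed_Collect_le continuous_intros)
  moreover have "convex T" unfolding T_def convex_def
    by (auto intro!: add_nonneg_nonneg mult_nonneg_nonneg)
  ultimately consider (a) "\<exists>z\<in>stdsimp. transpose A *v z \<in> T" | (b) "\<exists>c \<beta>. (\<forall>j. inner c (column j (transpose A)) < \<beta>) \<and> (\<forall>t\<in>T. \<beta> < inner c t)"
    using sep_alt by blast
  then show ?thesis
  proof cases
    case a
    then obtain z where z: "z \<in> stdsimp" "transpose A *v z \<in> T" by blast
    have "z \<noteq> 0" using z(1) unfolding stdsimp_def by auto
    then show ?thesis using z unfolding stdsimp_def T_def vnonneg_def by blast
  next
    case b
    then obtain c \<beta> where c: "\<forall>j. inner c (column j (transpose A)) < \<beta>" "\<forall>t\<in>T. \<beta> < inner c t" by blast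
    have "0 \<in> T" unfolding T_def by simp
    then have b0: "\<beta> < 0" using c(2) by fastforce
    have ci: "c$i \<ge> 0" for i
    proof (rule ccontr)
      assume "\<not> c$i \<ge> 0"
      then have ci: "c$i < 0" by simp
      have "(\<beta> / c$i) *\<^sub>R axis i 1 \<in> T" unfolding T_def using ci b0
        by (auto simp: axis_def divide_neg_neg less_imp_le)
      then have "\<beta> < inner c ((\<beta> / c$i) *\<^sub>R axis i 1)" using c(2) by blast
      also have "\<dots> = \<beta>" unfolding inner_axis_scale using ci by simp
      finally show False by simp
    qed
    have "(A *v c)$j \<le> \<beta>" for j
    proof -
      have "(A *v c)$j = inner c (column j (transpose A))"
        unfolding mv_nth by (simp add: transpose_def inner_vec_def column_def mult.commute)
      then show ?thesis using c(1) by (simp add: less_imp_le)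
    qed
    moreover have "vnonneg c" unfolding vnonneg_def using ci by simp
    ultimately show ?thesis using b0 by blast
  qed
qed




lemma scaled_id: "(e *\<^sub>R mat 1) *v (x::real^'n) = e *\<^sub>R x"
  by (metis matrix_scaleR_vector_ac matrix_vector_mul_lid)

lemma lim_good:
  fixes J :: "real^'n^'n"
  assumes inv: "invertible J" and sh: "\<And>e. e > 0 \<Longrightarrow> Mgood (J + e *\<^sub>R mat 1)"
  shows "Mgood J"
proof -
  define L where "L = matrix_inv J"
  obtain K where K: "K > 0" "\<And>u. norm (L *v u) \<le> norm u * K"
    using bounded_linear.pos_bounded[OF matrix_vector_mul_bounded_linear[of L]] by blast
  have "vnonneg x" if Jx: "vnonneg (J *v x)" for x
  proof (rule ccontr)
    assume "\<not> vnonneg x"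
    then obtain i where xi: "x$i < 0" unfolding vnonneg_def by (meson not_le)
    define nx where "nx = norm x"
    have nx0: "nx \<ge> 0" unfolding nx_def by simp
    define e where "e = min (1 / (2 * K)) ((- x$i) / (4 * K * (nx + 1)))"
    have "4 * K * (nx + 1) > 0" using K nx0 by simp
    then have "(- x$i) / (4 * K * (nx + 1)) > 0" using xi by (intro divide_pos_pos) auto
    then have e0: "e > 0" unfolding e_def using K by simp
    have eK: "e * K \<le> 1/2"
    proof -
      have "e \<le> 1 / (2 * K)" unfolding e_def by simp
      then have "e * K \<le> 1 / (2 * K) * K" using K by (intro mult_right_mono) auto
      also have "\<dots> = 1/2" using K by simp
      finally show ?thesis .
    qed
    have eK2: "e * K * (2 * nx) \<le> - x$i / 2"
    proof -
      have "e \<le> (- x$i) / (4 * K * (nx + 1))" unfolding e_def by simp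
      then have "e * K \<le> (- x$i) / (4 * K * (nx + 1)) * K" using K by (intro mult_right_mono) auto
      also have "\<dots> = (- x$i) / (4 * (nx + 1))" using K by simp
      finally have "e * K * (2 * nx) \<le> (- x$i) / (4 * (nx + 1)) * (2 * nx)" using nx0
        by (intro mult_right_mono) auto
      also have "\<dots> = (- x$i) / 2 * (nx / (nx + 1))" using nx0 by (simp add: field_simps)
      also have "\<dots> \<le> (- x$i) / 2 * 1" using xi nx0 by (intro mult_left_mono) auto
      finally show ?thesis by simp
    qed
    define A where "A = J + e *\<^sub>R mat 1"
    have gA: "Mgood A" unfolding A_def using sh e0 by blast
    then have invA: "invertible A" unfolding Mgood_def by blast
    define xe where "xe = matrix_inv A *v (J *v x)"
    have Axe: "A *v xe = J *v x" unfolding xe_def using inv_apply[OF invA] by simp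
    then have xe0: "vnonneg xe" using gA Jx unfolding Mgood_def by metis
    have "J *v xe + e *\<^sub>R xe = J *v x" using Axe unfolding A_def
      by (simp add: matrix_vector_mult_add_rdistrib scaled_id)
    then have "J *v (x - xe) = e *\<^sub>R xe"
      by (simp add: matrix_vector_mult_diff_distrib algebra_simps)
    then have "x - xe = e *\<^sub>R (L *v xe)"
    proof -
      assume h: "J *v (x - xe) = e *\<^sub>R xe"
      have "x - xe = L *v (J *v (x - xe))" using inv_apply(2)[OF inv] unfolding L_def by simp
      also have "\<dots> = e *\<^sub>R (L *v xe)" unfolding h by (simp add: matrix_vector_mult_scaleR)
      finally show ?thesis .
    qed
    then have xeq: "x = xe + e *\<^sub>R (L *v xe)" by (simp add: algebra_simps)
    have "norm xe \<le> norm x + e * norm (L *v xe)"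
    proof -
      have "xe = x - e *\<^sub>R (L *v xe)" using xeq by (simp add: algebra_simps)
      then have "norm xe \<le> norm x + norm (e *\<^sub>R (L *v xe))"
        using norm_triangle_ineq4[of x "e *\<^sub>R (L *v xe)"] by simp
      then show ?thesis using e0 by simp
    qed
    also have "e * norm (L *v xe) \<le> e * (norm xe * K)" using K(2) e0 by (simp add: mult_left_mono)
    finally have "norm xe \<le> nx + (e * K) * norm xe" unfolding nx_def by (simp add: algebra_simps)
    moreover have "(e * K) * norm xe \<le> 1/2 * norm xe" using eK by (intro mult_right_mono) auto
    ultimately have nxe: "norm xe \<le> 2 * nx" by simp
    have "\<bar>(L *v xe)$i\<bar> \<le> norm (L *v xe)" by (rule component_le_norm_cart)
    also have "\<dots> \<le> norm xe * K" by (rule K(2))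
    also have "\<dots> \<le> 2 * nx * K" using nxe K by (intro mult_right_mono) auto
    finally have "e * \<bar>(L *v xe)$i\<bar> \<le> e * (2 * nx * K)" using e0 by (simp add: mult_left_mono)
    also have "\<dots> = e * K * (2 * nx)" by simp
    finally have b1: "e * \<bar>(L *v xe)$i\<bar> \<le> - x$i / 2" using eK2 by linarith
    have "x$i = xe$i + e * (L *v xe)$i" using arg_cong[OF xeq, of "\<lambda>v. v$i"] by simp
    moreover have "xe$i \<ge> 0" using xe0 vnonneg_def by blast
    moreover have "- (e * \<bar>(L *v xe)$i\<bar>) \<le> e * (L *v xe)$i"
    proof -
      have "- \<bar>(L *v xe)$i\<bar> \<le> (L *v xe)$i" by simp
      then have "e * (- \<bar>(L *v xe)$i\<bar>) \<le> e * (L *v xe)$i" using e0 by (intro mult_left_mono) auto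
      then show ?thesis by simp
    qed
    ultimately have "x$i \<ge> x$i / 2" using b1 by linarith
    with xi show False by simp
  qed
  with inv show ?thesis unfolding Mgood_def by blast
qed

lemma tr_nth: "transpose A $ i $ j = A $ j $ i"
  by (simp add: transpose_def)

lemma irr_trans:
  assumes "irreducible_mat (A::real^'n^'n)"
  shows "irreducible_mat (transpose A)"
  unfolding irreducible_mat_def
proof
  assume "\<exists>I. I \<noteq> {} \<and> I \<noteq> UNIV \<and> (\<forall>i\<in>I. \<forall>j. j \<notin> I \<longrightarrow> transpose A $ i $ j = 0)"
  then obtain I :: "'n set" where I1: "I \<noteq> {}" "I \<noteq> UNIV" and I3: "\<forall>i\<in>I. \<forall>j. j \<notin> I \<longrightarrow> transpose A $ i $ j = 0"
    by blast
  have I4: "A $ j $ i = 0" if "i \<in> I" "j \<notin> I" for i j using I3 that tr_nth[of A i j] by simp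
  have "- I \<noteq> {}" "- I \<noteq> UNIV" using I1 by auto
  moreover have "\<forall>i\<in>- I. \<forall>j. j \<notin> - I \<longrightarrow> A $ i $ j = 0" using I4 by simp
  ultimately have "\<exists>I. I \<noteq> {} \<and> I \<noteq> UNIV \<and> (\<forall>i\<in>I. \<forall>j. j \<notin> I \<longrightarrow> A $ i $ j = 0)"
    by (intro exI[of _ "- I"]) simp
  then show False using assms unfolding irreducible_mat_def by simp
qed

lemma Zmat_trans: "Zmat A \<Longrightarrow> Zmat (transpose A)"
  unfolding Zmat_def tr_nth by simp

lemma Zmat_shift: "Zmat A \<Longrightarrow> Zmat (A + e *\<^sub>R mat 1)"
  unfolding Zmat_def by (simp add: mat_def)

context qve begin

abbreviation "JJ \<equiv> Fderiv M b xs"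

lemma JZ: "Zmat JJ" using Zmat_J[OF xs_nn] .

lemma J_shift_good:
  assumes e: "e > 0"
  shows "Mgood (JJ + e *\<^sub>R mat 1)"
proof -
  let ?A = "JJ + e *\<^sub>R mat 1"
  have ZA: "Zmat ?A" using Zmat_shift[OF JZ] .
  from alt1[of ?A] show ?thesis
  proof
    assume "\<exists>z. vnonneg z \<and> z \<noteq> 0 \<and> (\<forall>i. (?A *v z)$i \<le> 0)"
    then obtain z where z: "vnonneg z" "z \<noteq> 0" "\<And>i. (?A *v z)$i \<le> 0" by blast
    have "(JJ *v z)$i \<le> - e * z$i" for i
    proof -
      have "?A *v z = JJ *v z + e *\<^sub>R z"
        by (simp add: matrix_vector_mult_add_rdistrib scaled_id)
      then show ?thesis using z(3)[of i] by simp
    qed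
    then show ?thesis using bad[OF e z(1,2)] by blast
  next
    assume "\<exists>l. vnonneg l \<and> vpos (transpose ?A *v l)"
    then obtain l where "vnonneg l" "vpos (transpose ?A *v l)" by blast
    then obtain v where "vpos v" "vpos (transpose ?A *v v)" using semi1 by blast
    then have "Mgood (transpose ?A)" using mono_pos[OF Zmat_trans[OF ZA]] by blast
    then have "Mgood (transpose (transpose ?A))" by (rule good_trans)
    then show ?thesis by simp
  qed
qed

lemma J_good_if_inv: "invertible JJ \<Longrightarrow> Mgood JJ"
  using lim_good J_shift_good by blast

lemma J_left: "\<exists>l. vnonneg l \<and> l \<noteq> 0 \<and> vnonneg (transpose JJ *v l)"
proof -
  from alt2[of JJ] show ?thesis
  proof
    assume "\<exists>z \<beta>. vnonneg z \<and> \<beta> < 0 \<and> (\<forall>i. (JJ *v z)$i \<le> \<beta>)"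
    then obtain z \<beta> where z: "vnonneg z" "\<beta> < 0" "\<And>i. (JJ *v z)$i \<le> \<beta>" by blast
    have zi: "z$i \<ge> 0" for i using z(1) vnonneg_def by blast
    have "z \<noteq> 0"
    proof
      assume "z = 0"
      then have "(JJ *v z)$undefined = 0" by simp
      with z(2) z(3)[of undefined] show False by simp
    qed
    define S where "S = sum (\<lambda>i. z$i) UNIV"
    have S0: "S \<ge> 0" unfolding S_def using zi by (simp add: sum_nonneg)
    define e where "e = - \<beta> / (S + 1)"
    have e0: "e > 0" unfolding e_def using z(2) S0 by (intro divide_pos_pos) auto
    have "(JJ *v z)$i \<le> - e * z$i" for i
    proof -
      have zS: "z$i \<le> S" unfolding S_def by (rule member_le_sum) (use zi in auto)
      have "e * z$i = - \<beta> * (z$i / (S + 1))" unfolding e_def by simp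
      also have "\<dots> \<le> - \<beta> * 1" using z(2) zS S0 zi[of i] by (intro mult_left_mono) auto
      finally show ?thesis using z(3)[of i] by simp
    qed
    then show ?thesis using bad[OF e0 z(1) \<open>z \<noteq> 0\<close>] by blast
  qed
qed

lemma sing:
  assumes ni: "\<not> invertible JJ" and irr: "irreducible_mat JJ"
  shows "\<exists>l. vpos l \<and> transpose JJ *v l = 0"
proof -
  obtain l where l: "vnonneg l" "l \<noteq> 0" "vnonneg (transpose JJ *v l)" using J_left by blast
  let ?C = "transpose JJ"
  have ZC: "Zmat ?C" using Zmat_trans[OF JZ] .
  have irrC: "irreducible_mat ?C" using irr_trans[OF irr] .
  have li: "l$i \<ge> 0" for i using l(1) vnonneg_def by blast
  define I where "I = {i. l$i = 0}"
  have "C0": "?C$i$j = 0" if "i \<in> I" "j \<notin> I" for i j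
  proof -
    have "(?C *v l)$i = (\<Sum>k\<in>UNIV. ?C$i$k * l$k)" by (rule mv_nth)
    also have "\<dots> = (\<Sum>k\<in>UNIV - {i}. ?C$i$k * l$k)"
      by (subst sum.remove[of UNIV i]) (use that in \<open>auto simp: I_def\<close>)
    finally have eq: "(?C *v l)$i = (\<Sum>k\<in>UNIV - {i}. ?C$i$k * l$k)" .
    have terms: "\<forall>k\<in>UNIV - {i}. ?C$i$k * l$k \<le> 0"
      using ZC li unfolding Zmat_def by (auto intro: mult_nonpos_nonneg)
    have "(?C *v l)$i \<ge> 0" using l(3) vnonneg_def by blast
    moreover have "(\<Sum>k\<in>UNIV - {i}. ?C$i$k * l$k) \<le> 0" using terms by (intro sum_nonpos) blast
    ultimately have "(\<Sum>k\<in>UNIV - {i}. ?C$i$k * l$k) = 0" using eq by linarith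
    then have "(\<Sum>k\<in>UNIV - {i}. - (?C$i$k * l$k)) = 0" by (simp add: sum_negf)
    then have "\<forall>k\<in>UNIV - {i}. - (?C$i$k * l$k) = 0"
      using sum_nonneg_eq_0_iff[of "UNIV - {i}" "\<lambda>k. - (?C$i$k * l$k)"] terms by simp
    moreover have "j \<in> UNIV - {i}" "l$j > 0" using that li[of j] I_def by auto
    ultimately show ?thesis by auto
  qed
  have "I = {}"
  proof (rule ccontr)
    assume "I \<noteq> {}"
    then have "I = UNIV" using irrC C0 unfolding irreducible_mat_def by blast
    then have "l$k = 0" for k unfolding I_def by (metis UNIV_I mem_Collect_eq)
    then have "l = 0" by (simp add: vec_eq_iff)
    with l(2) show False by simp
  qed
  then have "l$k \<noteq> 0" for k unfolding I_def by blast
  then have lpos: "vpos l" unfolding vpos_def using li by (simp add: order_less_le)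
  have "?C *v l = 0"
  proof (rule ccontr)
    assume "?C *v l \<noteq> 0"
    then have "Mgood ?C" using mono_irr[OF ZC irrC _ lpos l(3)] by blast
    then have "invertible (transpose ?C)" using good_trans Mgood_def by blast
    with ni show False by simp
  qed
  with lpos show ?thesis by blast
qed

end



lemma inner_transpose: "inner l ((A::real^'n^'n) *v u) = inner (transpose A *v l) u"
  by (metis dot_lmul_matrix transpose_transpose vector_transpose_matrix)

lemma FD_step:
  assumes "bilinear b"
  shows "Fderiv M b (x + w) = Fderiv M b x - matrix (b w) - matrix (\<lambda>y. b y w)"
  unfolding Fderiv_def matrix_def
  by (simp add: vec_eq_iff bilinear_ladd[OF assms] bilinear_radd[OF assms] algebra_simps)

lemma FD_zero:
  assumes "bilinear b"
  shows "Fderiv M b 0 = M"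
  unfolding Fderiv_def matrix_def
  by (simp add: vec_eq_iff bilinear_lzero[OF assms] bilinear_rzero[OF assms])

lemma F_zero:
  assumes "bilinear b"
  shows "Fmap M a b 0 = - a"
  unfolding Fmap_def by (simp add: bilinear_lzero[OF assms])

context qve begin

lemma key:
  assumes x: "vnonneg x" "vle x xs" and dis: "invertible JJ \<or> x \<noteq> xs"
    and H: "invertible JJ \<or> (irreducible_mat JJ \<and> (\<forall>x. vnonneg x \<and> vle x xs \<and> x \<noteq> xs \<longrightarrow> Fderiv M b x \<noteq> JJ))"
  shows "Mgood (Fderiv M b x)"
proof (cases "invertible JJ")
  case True
  then have "Mgood JJ" by (rule J_good_if_inv)
  then show ?thesis using good_cmp[OF _ Zmat_J[OF x(1)]] J_cmp[OF x] by blast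
next
  case False
  with H have irr: "irreducible_mat JJ" and dist: "Fderiv M b x \<noteq> JJ" using x dis by auto
  obtain l where l: "vpos l" "transpose JJ *v l = 0" using sing[OF False irr] by blast
  let ?B = "transpose (Fderiv M b x)" and ?C = "transpose JJ"
  have ZB: "Zmat ?B" using Zmat_trans[OF Zmat_J[OF x(1)]] .
  have le: "?C$i$j \<le> ?B$i$j" for i j unfolding tr_nth using J_cmp[OF x] .
  have Cl: "vnonneg (?C *v l)" using l(2) by (simp add: vnonneg_def)
  have Bl0: "?B *v l \<noteq> 0"
  proof
    assume B0: "?B *v l = 0"
    have "?B$i$j = ?C$i$j" for i j
    proof -
      have "(\<Sum>k\<in>UNIV. (?B$i$k - ?C$i$k) * l$k) = 0"
        using B0 l(2) mv_diff_nth[of ?B l i ?C] by simp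
      then have "\<forall>k\<in>UNIV. (?B$i$k - ?C$i$k) * l$k = 0"
        using sum_nonneg_eq_0_iff[of UNIV "\<lambda>k. (?B$i$k - ?C$i$k) * l$k"] le l(1)
        by (simp add: vpos_def less_imp_le)
      then have "(?B$i$j - ?C$i$j) * l$j = 0" by blast
      moreover have "l$j > 0" using l(1) vpos_def by blast
      ultimately show ?thesis by simp
    qed
    then have "?B = ?C" by (simp add: vec_eq_iff)
    then have "Fderiv M b x = JJ" by (metis transpose_transpose)
    with dist show False by simp
  qed
  have "Mgood ?B" using mono_irr[OF ZB irr_trans[OF irr] le l(1) Cl Bl0] .
  then have "Mgood (transpose ?B)" by (rule good_trans)
  then show ?thesis by simp
qed

lemma newton:
  fixes x :: "nat \<Rightarrow> real^'n"
  assumes H: "invertible JJ \<or> (irreducible_mat JJ \<and> (\<forall>x. vnonneg x \<and> vle x xs \<and> x \<noteq> xs \<longrightarrow> Fderiv M b x \<noteq> JJ))"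
    and hx0: "x 0 = 0"
    and hx: "\<And>k. Fderiv M b (x k) *v (x (Suc k) - x k) = - Fmap M a b (x k)"
  shows "Mgood (Fderiv M b (x k))"
proof -
  define Q where "Q k \<longleftrightarrow> vnonneg (x k) \<and> vle (x k) xs \<and> vnonneg (- Fmap M a b (x k)) \<and> (invertible JJ \<or> x k \<noteq> xs)" for k
  have "Q k" for k
  proof (induction k)
    case 0
    have "xs \<noteq> 0" using xspos by (auto simp: vpos_def)
    then show ?case unfolding Q_def hx0 F_zero[OF bil] using ann xs_nn
      by (simp add: vnonneg_def vle_def)
  next
    case (Suc k)
    then have q: "vnonneg (x k)" "vle (x k) xs" "vnonneg (- Fmap M a b (x k))" "invertible JJ \<or> x k \<noteq> xs"
      unfolding Q_def by auto
    have G: "Mgood (Fderiv M b (x k))" using key[OF q(1,2,4) H] .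
    define w where "w = x (Suc k) - x k"
    define u where "u = xs - x k"
    have Jw: "Fderiv M b (x k) *v w = - Fmap M a b (x k)" unfolding w_def by (rule hx)
    have w0: "vnonneg w" using G q(3) Jw unfolding Mgood_def by metis
    have u0: "vnonneg u" using q(2) unfolding u_def vle_def vnonneg_def by simp
    have e1: "Fmap M a b xs = Fmap M a b (x k) + Fderiv M b (x k) *v u - b u u"
      unfolding u_def by (rule FEXP[OF bil])
    have "Fderiv M b (x k) *v (xs - x (Suc k)) = Fderiv M b (x k) *v u - Fderiv M b (x k) *v w"
      unfolding u_def w_def by (simp add: matrix_vector_mult_diff_distrib)
    also have "\<dots> = b u u" using e1 Jw F_xs by (simp add: algebra_simps)
    finally have e2: "Fderiv M b (x k) *v (xs - x (Suc k)) = b u u" .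
    then have "vnonneg (xs - x (Suc k))" using G bnn[OF u0 u0] unfolding Mgood_def by metis
    then have le: "vle (x (Suc k)) xs" unfolding vle_def vnonneg_def by simp
    have "Fmap M a b (x (Suc k)) = Fmap M a b (x k) + Fderiv M b (x k) *v w - b w w"
      unfolding w_def by (rule FEXP[OF bil])
    then have Fs: "- Fmap M a b (x (Suc k)) = b w w" using Jw by simp
    have xs0: "vnonneg (x (Suc k))" using q(1) w0 unfolding w_def vnonneg_def
      by (metis add_nonneg_nonneg diff_add_cancel vector_add_component)
    have dis: "invertible JJ \<or> x (Suc k) \<noteq> xs"
    proof (rule ccontr)
      assume "\<not> (invertible JJ \<or> x (Suc k) \<noteq> xs)"
      then have ni: "\<not> invertible JJ" and eq: "x (Suc k) = xs" by auto
      then have xk: "x k \<noteq> xs" using q(4) by blast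
      have irr: "irreducible_mat JJ" using H ni by blast
      obtain l where l: "vpos l" "transpose JJ *v l = 0" using sing[OF ni irr] by blast
      have buu: "b u u = 0" using e2 eq by simp
      have "Fmap M a b (x k) = Fmap M a b xs + JJ *v (x k - xs) - b (x k - xs) (x k - xs)"
        by (rule FEXP[OF bil])
      also have "x k - xs = - u" unfolding u_def by simp
      finally have "- Fmap M a b (x k) = JJ *v u"
        using F_xs buu by (simp add: mv_neg bilinear_lneg[OF bil] bilinear_rneg[OF bil])
      then have "inner l (- Fmap M a b (x k)) = 0" using l(2) by (simp add: inner_transpose)
      moreover define f where "f = - Fmap M a b (x k)"
      ultimately have s0: "(\<Sum>i\<in>UNIV. l$i * f$i) = 0" by (simp add: inner_vec_def)
      have fi: "f$i \<ge> 0" for i using q(3) vnonneg_def f_def by blast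
      have li: "l$i > 0" for i using l(1) vpos_def by blast
      have "\<forall>i\<in>UNIV. l$i * f$i = 0"
        using sum_nonneg_eq_0_iff[of UNIV "\<lambda>i. l$i * f$i"] s0 fi li
        by (simp add: less_imp_le)
      then have "l$i * f$i = 0" for i by blast
      then have "f$i = 0" for i using li[of i] by (metis less_irrefl mult_eq_0_iff)
      then have "f = 0" by (simp add: vec_eq_iff)
      then have "Fmap M a b (x k) = 0" unfolding f_def by simp
      then have "is_solution M a b (x k)" using q(1) unfolding is_solution_def Fmap_def
        by (simp add: algebra_simps)
      then have "vle xs (x k)" using xsmin is_minimal_solution_def by blast
      then have "x k = xs" using q(2) unfolding vle_def by (simp add: vec_eq_iff order_antisym)
      with xk show False by simp
    qed
    show ?case unfolding Q_def using xs0 le Fs bnn[OF w0 w0] dis by simp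
  qed
  then show ?thesis unfolding Q_def using key H by blast
qed

end


theorem mainTheorem13:
  fixes M :: "real^'n^'n" and a :: "real^'n" and b :: "real^'n \<Rightarrow> real^'n \<Rightarrow> real^'n"
    and x xi w :: "nat \<Rightarrow> real^'n" and Mt :: "nat \<Rightarrow> real^'n^'n" and At :: "nat \<Rightarrow> real^'n"
  assumes hM: "M_matrix M" "invertible M"
    and ha: "vnonneg a"
    and hb: "bilinear b" "\<And>u v. vnonneg u \<Longrightarrow> vnonneg v \<Longrightarrow> vnonneg (b u v)"
    and hH: "hypH M a b"
    and hx0: "x 0 = 0"
    and hx: "\<And>k. Fderiv M b (x k) *v (x (Suc k) - x k) = - Fmap M a b (x k)"
    and hxi0: "xi 0 = 0" and hMt0: "Mt 0 = M" and hat0: "At 0 = a"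
    and hw: "\<And>k. w k = matrix_inv (Mt k) *v At k"
    and hxi: "\<And>k. xi (Suc k) = xi k + w k"
    and hat: "\<And>k. At (Suc k) = b (w k) (w k)"
    and hMt: "\<And>k. Mt (Suc k) = Mt k - matrix (b (w k)) - matrix (\<lambda>y. b y (w k))"
  shows "\<forall>k. invertible (Mt k) \<and> xi k = x k \<and> Mt k = Fderiv M b (x k)
           \<and> At k = - Fmap M a b (x k) \<and> w k = x (Suc k) - x k"
proof -
  obtain xs where xsmin: "is_minimal_solution M a b xs" and xspos: "vpos xs"
    and H: "invertible (Fderiv M b xs) \<or> (irreducible_mat (Fderiv M b xs) \<and>
        (\<forall>x. vnonneg x \<and> vle x xs \<and> x \<noteq> xs \<longrightarrow> Fderiv M b x \<noteq> Fderiv M b xs))"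
    using hH unfolding hypH_def by blast
  interpret qve M a b xs
    using Zmat_M[OF hM(1)] hM(2) ha hb xsmin xspos by unfold_locales auto
  have G: "Mgood (Fderiv M b (x k))" for k using newton[OF H hx0 hx] .
  have ww: "w k = x (Suc k) - x k" if "Mt k = Fderiv M b (x k)" "At k = - Fmap M a b (x k)" for k
  proof -
    have inv: "invertible (Fderiv M b (x k))" using G Mgood_def by blast
    have "w k = matrix_inv (Fderiv M b (x k)) *v (Fderiv M b (x k) *v (x (Suc k) - x k))"
      using hw[of k] that hx[of k] by simp
    also have "\<dots> = x (Suc k) - x k" using inv_apply(2)[OF inv] .
    finally show ?thesis .
  qed
  have P: "xi k = x k \<and> Mt k = Fderiv M b (x k) \<and> At k = - Fmap M a b (x k)" for k
  proof (induction k)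
    case 0
    show ?case using hxi0 hMt0 hat0 hx0 FD_zero[OF hb(1)] F_zero[OF hb(1)] by simp
  next
    case (Suc k)
    then have wk: "w k = x (Suc k) - x k" using ww by blast
    have xs: "x (Suc k) = x k + w k" using wk by simp
    have "xi (Suc k) = x (Suc k)" using hxi[of k] Suc wk by simp
    moreover have "Mt (Suc k) = Fderiv M b (x (Suc k))"
      using hMt[of k] Suc unfolding xs FD_step[OF hb(1)] by simp
    moreover have "At (Suc k) = - Fmap M a b (x (Suc k))"
    proof -
      have "Fmap M a b (x (Suc k)) = Fmap M a b (x k) + Fderiv M b (x k) *v w k - b (w k) (w k)"
        using FEXP[OF hb(1), of M a "x (Suc k)" "x k"] wk by simp
      then show ?thesis using hat[of k] hx[of k] wk by simp
    qed
    ultimately show ?case by blast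
  qed
  show ?thesis
  proof
    fix k
    show "invertible (Mt k) \<and> xi k = x k \<and> Mt k = Fderiv M b (x k)
           \<and> At k = - Fmap M a b (x k) \<and> w k = x (Suc k) - x k"
      using P[of k] ww[of k] G[of k] Mgood_def by auto
  qed
qed

end
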